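(* Let $\mathbf{A}:\mathbb{R}^{2\times 2}\to\mathbb{R}^2$ be the Cauchy–Riemann map $\mathbf{A}:X=(X_{11}+X_{22},\,X_{21}-X_{12})$. Fix constants $b,c>0$ with $b+c<1$ and $\sqrt2\,c+b>1$, and a unit vector $\eta\in\mathbb{R}^2$. Define $F(x,X):=\mathbf{A}:X+\eta\big(b|X|+c|\mathbf{A}:X|\big)$ for $x\in\mathbb{R}^2$, $X\in\mathbb{R}^{2\times2}$. Then for all $X,Y\in\mathbb{R}^{2\times2}$, $$\big|[F(x,X+Y)-F(x,X)]-\mathbf{A}:Y\big|\leq b\,\nu(\mathbf{A})|Y|+c|\mathbf{A}:Y|,$$ so $F$ satisfies the AK-Condition with respect to $\mathbf{A}$ with $\alpha\equiv1$, $\beta=b$, $\gamma=c$; but there is no $\beta\in(0,1)$ for which $\big|[F(x,X+Y)-F(x,X)]-\mathbf{A}:Y\big|\leq\beta\,\nu(\mathbf{A})|Y|$ holds for all $X,Y$, i.e. $F$ does not satisfy the K-Condition with respect to $\mathbf{A}$.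
   Context: For $X\in\mathbb{R}^{2\times2}$, $|X|$ is the Frobenius norm; $\nu(\mathbf{A}):=\min_{|\eta|=|a|=1}|\mathbf{A}:\eta\otimes a|$, where $\eta\otimes a$ is the matrix with entries $\eta_\beta a_j$ (for the Cauchy–Riemann map, $\nu(\mathbf{A})=1$). AK-Condition: $F$ satisfies it with respect to $\mathbf{A}$ if there exist a positive function $\alpha$ with $\alpha,1/\alpha\in L^\infty$ and $\beta,\gamma>0$ with $\beta+\gamma<1$ such that for all $X,Y$ and a.e. $x$: $\big|\alpha(x)[F(x,X+Y)-F(x,Y)]-\mathbf{A}:X\big|\leq\beta\,\nu(\mathbf{A})|X|+\gamma|\mathbf{A}:X|$. K-Condition: $F$ satisfies it with respect to $\mathbf{A}$ if there exists $0<\beta<1$ such that for all $X,Y$ and a.e. $x$: $\big|[F(x,X+Y)-F(x,X)]-\mathbf{A}:Y\big|\leq\beta\,\nu(\mathbf{A})|Y|$. *)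

theory Defs
  imports "HOL-Analysis.Analysis"
begin

text \<open>Matrices in R^{2x2} are elements of real^2^2, with X$i$j the (i,j) entry.
  The library norm on real^2^2 is the Frobenius norm.\<close>

definition tensor :: "real^2 \<Rightarrow> real^2 \<Rightarrow> real^2^2" where
  "tensor \<eta> a = (\<chi> i j. \<eta>$i * a$j)"

definition nu :: "(real^2^2 \<Rightarrow> real^2) \<Rightarrow> real" where
  "nu A = Inf {norm (A (tensor \<eta> a)) | \<eta> a. norm \<eta> = 1 \<and> norm a = 1}"

definition CR :: "real^2^2 \<Rightarrow> real^2" where
  "CR X = vector [X$1$1 + X$2$2, X$2$1 - X$1$2]"

definition AK_condition :: "(real^2^2 \<Rightarrow> real^2) \<Rightarrow> (real^2 \<Rightarrow> real^2^2 \<Rightarrow> real^2) \<Rightarrow> bool" where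
  "AK_condition A F \<longleftrightarrow>
     (\<exists>\<alpha> \<beta> \<gamma>. \<alpha> \<in> borel_measurable lborel \<and> (\<forall>x. \<alpha> x > 0)
        \<and> (\<exists>M. AE x in lborel. \<bar>\<alpha> x\<bar> \<le> M) \<and> (\<exists>M. AE x in lborel. \<bar>1 / \<alpha> x\<bar> \<le> M)
        \<and> \<beta> > 0 \<and> \<gamma> > 0 \<and> \<beta> + \<gamma> < 1
        \<and> (AE x in lborel. \<forall>X Y.
             norm (\<alpha> x *\<^sub>R (F x (X + Y) - F x Y) - A X) \<le> \<beta> * nu A * norm X + \<gamma> * norm (A X)))"

definition K_condition :: "(real^2^2 \<Rightarrow> real^2) \<Rightarrow> (real^2 \<Rightarrow> real^2^2 \<Rightarrow> real^2) \<Rightarrow> bool" where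
  "K_condition A F \<longleftrightarrow>
     (\<exists>\<beta>. 0 < \<beta> \<and> \<beta> < 1
        \<and> (AE x in lborel. \<forall>X Y.
             norm ((F x (X + Y) - F x X) - A Y) \<le> \<beta> * nu A * norm Y))"

end

theory Submission
  imports Defs
begin

lemma CR_add: "CR (X + Y) = CR X + CR Y"
  unfolding CR_def by (simp add: vec_eq_iff forall_2)

lemma CR_zero: "CR 0 = 0"
  unfolding CR_def by (simp add: vec_eq_iff forall_2)

lemma norm2_eq: "norm (v::real^2) = sqrt ((v$1)^2 + (v$2)^2)"
  unfolding norm_vec_def L2_set_def by (simp add: sum_2)

lemma nu_CR: "nu CR = 1"
proof -
  have "{norm (CR (tensor \<eta> a)) | \<eta> a. norm \<eta> = 1 \<and> norm a = 1} = {1}"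
  proof (intro equalityI subsetI)
    fix t assume "t \<in> {norm (CR (tensor \<eta> a)) | \<eta> a. norm \<eta> = 1 \<and> norm a = 1}"
    then obtain \<eta> a where t: "t = norm (CR (tensor \<eta> a))" and h: "norm \<eta> = 1" "norm a = 1" by blast
    have e: "(\<eta>$1)^2 + (\<eta>$2)^2 = 1" using h(1) unfolding norm2_eq
      by (metis real_sqrt_eq_1_iff)
    have f: "(a$1)^2 + (a$2)^2 = 1" using h(2) unfolding norm2_eq
      by (metis real_sqrt_eq_1_iff)
    have "(\<eta>$1 * a$1 + \<eta>$2 * a$2)^2 + (\<eta>$2 * a$1 - \<eta>$1 * a$2)^2
          = ((\<eta>$1)^2 + (\<eta>$2)^2) * ((a$1)^2 + (a$2)^2)"
      by (simp add: power2_eq_square algebra_simps)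
    then show "t \<in> {1}" using e f unfolding t norm2_eq CR_def tensor_def by simp
  next
    fix t assume "t \<in> {1::real}"
    hence t: "t = 1" by simp
    let ?e = "vector [1, 0] :: real^2"
    have n: "norm ?e = 1" unfolding norm2_eq by simp
    have "norm (CR (tensor ?e ?e)) = 1" unfolding norm2_eq CR_def tensor_def by simp
    then show "t \<in> {norm (CR (tensor \<eta> a)) | \<eta> a. norm \<eta> = 1 \<and> norm a = 1}"
      using n t by (intro CollectI exI[of _ ?e]) simp
  qed
  then show ?thesis unfolding nu_def by simp
qed

lemma key:
  fixes b c :: real and \<eta> :: "real^2"
  assumes "b > 0" and "c > 0" and "norm \<eta> = 1"
  shows "norm ((CR (X + Y) + (b * norm (X + Y) + c * norm (CR (X + Y))) *\<^sub>R \<eta>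
            - (CR X + (b * norm X + c * norm (CR X)) *\<^sub>R \<eta>)) - CR Y)
         \<le> b * norm Y + c * norm (CR Y)"
proof -
  have eq: "(CR (X + Y) + (b * norm (X + Y) + c * norm (CR (X + Y))) *\<^sub>R \<eta>
            - (CR X + (b * norm X + c * norm (CR X)) *\<^sub>R \<eta>)) - CR Y
         = (b * (norm (X + Y) - norm X) + c * (norm (CR X + CR Y) - norm (CR X))) *\<^sub>R \<eta>"
    by (simp add: CR_add algebra_simps)
  have 1: "\<bar>norm (X + Y) - norm X\<bar> \<le> norm Y"
    using norm_triangle_ineq3[of "X+Y" X] by simp
  have 2: "\<bar>norm (CR X + CR Y) - norm (CR X)\<bar> \<le> norm (CR Y)"
    using norm_triangle_ineq3[of "CR X + CR Y" "CR X"] by simp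
  have "\<bar>b * (norm (X + Y) - norm X) + c * (norm (CR X + CR Y) - norm (CR X))\<bar>
        \<le> b * norm Y + c * norm (CR Y)"
  proof -
    have "\<bar>b * (norm (X + Y) - norm X)\<bar> \<le> b * norm Y"
      using 1 assms(1) by (simp add: abs_mult)
    moreover have "\<bar>c * (norm (CR X + CR Y) - norm (CR X))\<bar> \<le> c * norm (CR Y)"
      using 2 assms(2) by (simp add: abs_mult)
    ultimately show ?thesis by linarith
  qed
  then show ?thesis unfolding eq using assms(3) by simp
qed

lemma AE_lborel_const: "(AE x in (lborel::(real^2) measure). P x) \<Longrightarrow> \<exists>x. P x"
proof (rule ccontr)
  assume a: "AE x in (lborel::(real^2) measure). P x" and n: "\<not> (\<exists>x. P x)"
  have "emeasure (lborel::(real^2) measure) {x\<in>space lborel. \<not> P x} = 0"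
    using AE_E2[OF a] .
  then show False using n by simp
qed

theorem mainTheorem4:
  fixes b c :: real and \<eta> :: "real^2" and F :: "real^2 \<Rightarrow> real^2^2 \<Rightarrow> real^2"
  assumes "b > 0" and "c > 0" and "b + c < 1" and "sqrt 2 * c + b > 1"
    and "norm \<eta> = 1"
    and "\<And>x X. F x X = CR X + (b * norm X + c * norm (CR X)) *\<^sub>R \<eta>"
  shows "(\<forall>x X Y. norm ((F x (X + Y) - F x X) - CR Y) \<le> b * nu CR * norm Y + c * norm (CR Y))
    \<and> AK_condition CR F
    \<and> \<not> K_condition CR F"
proof (intro conjI)
  show P1: "\<forall>x X Y. norm ((F x (X + Y) - F x X) - CR Y) \<le> b * nu CR * norm Y + c * norm (CR Y)"
    using key[OF assms(1,2,5)] by (simp add: assms(6) nu_CR)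
  show "AK_condition CR F"
    unfolding AK_condition_def
    apply (rule exI[of _ "\<lambda>_. 1"], rule exI[of _ b], rule exI[of _ c])
    using assms(1-3) apply simp
    apply (intro conjI exI[of _ 1] AE_I2 allI order_refl)
    using P1 by (metis add.commute)
  show "\<not> K_condition CR F"
  proof
    assume "K_condition CR F"
    then obtain \<beta> where b1: "\<beta> < 1" and ae: "AE x in lborel. \<forall>X Y.
             norm ((F x (X + Y) - F x X) - CR Y) \<le> \<beta> * nu CR * norm Y"
      unfolding K_condition_def by blast
    obtain x0 where "\<forall>X Y. norm ((F x0 (X + Y) - F x0 X) - CR Y) \<le> \<beta> * nu CR * norm Y"
      using AE_lborel_const[OF ae] by blast
    hence H: "\<forall>X Y. norm ((F 0 (X + Y) - F 0 X) - CR Y) \<le> \<beta> * norm Y"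
      using nu_CR by (simp add: assms(6))
    let ?Y = "(\<chi> i j. if i = j then 1 else 0) :: real^2^2"
    have nY: "norm ?Y = sqrt 2"
      unfolding norm_vec_def L2_set_def by (simp add: sum_2 norm2_eq)
    have CRY: "CR ?Y = vector [2, 0]" unfolding CR_def by simp
    have nCRY: "norm (CR ?Y) = 2" unfolding CRY norm2_eq by simp
    have "norm ((F 0 (0 + ?Y) - F 0 0) - CR ?Y) = b * sqrt 2 + c * 2"
    proof -
      have "0 < b * sqrt 2 + c * 2" using assms(1,2) by (simp add: add_pos_pos)
      then show ?thesis using assms(5) by (simp add: assms(6) nY nCRY CR_zero)
    qed
    hence "b * sqrt 2 + c * 2 \<le> \<beta> * sqrt 2" using H by (metis nY)
    moreover have "sqrt 2 * sqrt 2 = 2" by simp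
    ultimately have "sqrt 2 * (b + sqrt 2 * c) \<le> sqrt 2 * \<beta>" by (simp add: algebra_simps)
    hence "b + sqrt 2 * c \<le> \<beta>" by simp
    with assms(4) b1 show False by simp
  qed
qed

end
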